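(* Let $c,d,d_1,d_2\in\mathbb{Z}$ and $T=T(c,d,d_1,d_2)$, i.e. $T_{r,k}=c+kd_1+rd_2+rkd$ for all $r,k\ge 0$. (i) (Odd Diamond Pattern) For all integers $r,k\ge 0$ and $n\ge 1$, $$\frac{\sum_{i=0}^{2n-1}T_{r+i,k}+\sum_{i=0}^{2n-1}T_{r+2n,k+i}+\sum_{i=0}^{2n-1}T_{r+2n-i,k+2n}+\sum_{i=0}^{2n-1}T_{r,k+2n-i}}{8n}=T_{r+n,k+n};$$ that is, the average of the $8n$ entries on the boundary of the diamond with corners $T_{r,k},T_{r+2n,k},T_{r+2n,k+2n},T_{r,k+2n}$ equals its middle entry. (ii) (Even Diamond Pattern) For all integers $r,k\ge 0$ and $n\ge 1$ with $n\le\min\{r,k\}$, $$\frac{\sum_{i=0}^{2n-2}\left(T_{r-n+1+i,\,k-n+1}+T_{r+n,\,k-n+1+i}+T_{r+n-i,\,k+n}+T_{r-n+1,\,k+n-i}\right)}{8n-4}=\frac{T_{r,k}+T_{r+1,k}+T_{r+1,k+1}+T_{r,k+1}}{4};$$ that is, the average of the $8n-4$ entries on the boundary of the diamond with corners $T_{r-n+1,k-n+1},T_{r+n,k-n+1},T_{r+n,k+n},T_{r-n+1,k+n}$ equals the average of the four entries $T_{r,k},T_{r+1,k},T_{r+1,k+1},T_{r,k+1}$.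
   Context: A number triangle is an array of integers $T_{r,k}$ indexed by integers $r,k\ge 0$ ($T_{r,k}$ the $k$-th entry of the $r$-th major diagonal). For $c,d,d_1,d_2\in\mathbb{Z}$, the Generalized Rascal Triangle $T(c,d,d_1,d_2)$ is the number triangle with $T_{r,k}=c+kd_1+rd_2+rkd$. *)

theory Defs
  imports Complex_Main
begin

definition rascalT :: "int \<Rightarrow> int \<Rightarrow> int \<Rightarrow> int \<Rightarrow> nat \<Rightarrow> nat \<Rightarrow> int" where
  "rascalT c d d1 d2 r k = c + int k * d1 + int r * d2 + int r * int k * d"

end

theory Submission
  imports Defs
begin

lemma lin_sum:
  fixes f :: "nat \<Rightarrow> int"
  assumes "\<And>i. i \<le> m \<Longrightarrow> f i = a + b * int i"
  shows "2 * (\<Sum>i=0..m. f i) = 2*(int m+1)*a + b*int m*(int m+1)"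
  using assms
proof (induction m)
  case 0 then show ?case by simp
next
  case (Suc m)
  have "2 * (\<Sum>i=0..Suc m. f i) = 2 * (\<Sum>i=0..m. f i) + 2 * f (Suc m)" by simp
  also have "\<dots> = 2*(int m+1)*a + b*int m*(int m+1) + 2 * (a + b * int (Suc m))"
    using Suc by simp
  finally show ?case by (simp add: algebra_simps)
qed

theorem mainTheorem9:
  fixes c d d1 d2 :: int
  defines "T \<equiv> rascalT c d d1 d2"
  shows "(\<forall>r k n::nat. n \<ge> 1 \<longrightarrow>
            (of_int ((\<Sum>i=0..2*n-1. T (r+i) k) + (\<Sum>i=0..2*n-1. T (r+2*n) (k+i))
                   + (\<Sum>i=0..2*n-1. T (r+2*n-i) (k+2*n)) + (\<Sum>i=0..2*n-1. T r (k+2*n-i))) :: real)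
              / of_nat (8*n) = of_int (T (r+n) (k+n)))
       \<and> (\<forall>r k n::nat. n \<ge> 1 \<and> n \<le> min r k \<longrightarrow>
            (of_int (\<Sum>i=0..2*n-2. T (r-n+1+i) (k-n+1) + T (r+n) (k-n+1+i)
                   + T (r+n-i) (k+n) + T (r-n+1) (k+n-i)) :: real) / of_nat (8*n-4)
            = of_int (T r k + T (r+1) k + T (r+1) (k+1) + T r (k+1)) / 4)"
proof (intro conjI allI impI)
  fix r k n :: nat
  assume "n \<ge> 1"
  then obtain p where np: "n = Suc p" by (cases n) auto
  have m: "2*n-1 = 2*p+1" using np by simp
  let ?m = "2*p+1"
  have s1: "2 * (\<Sum>i=0..?m. T (r+i) k) = 2*(int ?m+1)*T r k + (d2 + int k * d)*int ?m*(int ?m+1)"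
    by (rule lin_sum) (simp add: T_def rascalT_def algebra_simps)
  have s2: "2 * (\<Sum>i=0..?m. T (r+2*n) (k+i)) = 2*(int ?m+1)*T (r+2*n) k + (d1 + int (r+2*n) * d)*int ?m*(int ?m+1)"
    by (rule lin_sum) (simp add: T_def rascalT_def algebra_simps)
  have s3: "2 * (\<Sum>i=0..?m. T (r+2*n-i) (k+2*n)) = 2*(int ?m+1)*T (r+2*n) (k+2*n) - (d2 + int (k+2*n) * d)*int ?m*(int ?m+1)"
    using lin_sum[of ?m "\<lambda>i. T (r+2*n-i) (k+2*n)" "T (r+2*n) (k+2*n)" "- (d2 + int (k+2*n) * d)"]
    by (simp add: T_def rascalT_def algebra_simps np of_nat_diff)
  have s4: "2 * (\<Sum>i=0..?m. T r (k+2*n-i)) = 2*(int ?m+1)*T r (k+2*n) - (d1 + int r * d)*int ?m*(int ?m+1)"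
    using lin_sum[of ?m "\<lambda>i. T r (k+2*n-i)" "T r (k+2*n)" "- (d1 + int r * d)"]
    by (simp add: T_def rascalT_def algebra_simps np of_nat_diff)
  have key: "(\<Sum>i=0..2*n-1. T (r+i) k) + (\<Sum>i=0..2*n-1. T (r+2*n) (k+i))
                   + (\<Sum>i=0..2*n-1. T (r+2*n-i) (k+2*n)) + (\<Sum>i=0..2*n-1. T r (k+2*n-i))
         = int (8*n) * T (r+n) (k+n)"
    using s1 s2 s3 s4 unfolding m by (simp add: T_def rascalT_def np algebra_simps)
  show "(of_int ((\<Sum>i=0..2*n-1. T (r+i) k) + (\<Sum>i=0..2*n-1. T (r+2*n) (k+i))
                   + (\<Sum>i=0..2*n-1. T (r+2*n-i) (k+2*n)) + (\<Sum>i=0..2*n-1. T r (k+2*n-i))) :: real)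
              / of_nat (8*n) = of_int (T (r+n) (k+n))"
    unfolding key using np by (simp add: field_simps)
next
  fix r k n :: nat
  assume a: "n \<ge> 1 \<and> n \<le> min r k"
  then obtain p where np: "n = Suc p" by (cases n) auto
  obtain r0 where rr: "r = r0 + n" using a by (metis le_add_diff_inverse2 min.bounded_iff)
  obtain k0 where kk: "k = k0 + n" using a by (metis le_add_diff_inverse2 min.bounded_iff)
  have m: "2*n-2 = 2*p" using np by simp
  let ?m = "2*p"
  have e1: "r-n+1 = r0+1" "k-n+1 = k0+1" using rr kk by auto
  have s: "2 * (\<Sum>i=0..?m. T (r-n+1+i) (k-n+1) + T (r+n) (k-n+1+i)
                   + T (r+n-i) (k+n) + T (r-n+1) (k+n-i))
     = 2*(int ?m+1)*(T (r0+1) (k0+1) + T (r+n) (k0+1) + T (r+n) (k+n) + T (r0+1) (k+n))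
       + ((d2 + int (k0+1) * d) + (d1 + int (r+n) * d) - (d2 + int (k+n) * d) - (d1 + int (r0+1) * d))*int ?m*(int ?m+1)"
    unfolding e1
    using lin_sum[of ?m "\<lambda>i. T (r0+1+i) (k0+1) + T (r+n) (k0+1+i)
                   + T (r+n-i) (k+n) + T (r0+1) (k+n-i)"
       "T (r0+1) (k0+1) + T (r+n) (k0+1) + T (r+n) (k+n) + T (r0+1) (k+n)"
       "(d2 + int (k0+1) * d) + (d1 + int (r+n) * d) - (d2 + int (k+n) * d) - (d1 + int (r0+1) * d)"]
    by (simp add: T_def rascalT_def algebra_simps np rr kk of_nat_diff)
  have key: "4 * (\<Sum>i=0..2*n-2. T (r-n+1+i) (k-n+1) + T (r+n) (k-n+1+i)
                   + T (r+n-i) (k+n) + T (r-n+1) (k+n-i))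
      = int (8*n-4) * (T r k + T (r+1) k + T (r+1) (k+1) + T r (k+1))"
    using s[unfolded rr kk] unfolding m rr kk by (simp add: T_def rascalT_def np algebra_simps)
  have "(of_int (\<Sum>i=0..2*n-2. T (r-n+1+i) (k-n+1) + T (r+n) (k-n+1+i)
                   + T (r+n-i) (k+n) + T (r-n+1) (k+n-i)) :: real)
     = of_int (int (8*n-4) * (T r k + T (r+1) k + T (r+1) (k+1) + T r (k+1))) / 4"
    unfolding key[symmetric] by simp
  then show "(of_int (\<Sum>i=0..2*n-2. T (r-n+1+i) (k-n+1) + T (r+n) (k-n+1+i)
                   + T (r+n-i) (k+n) + T (r-n+1) (k+n-i)) :: real) / of_nat (8*n-4)
            = of_int (T r k + T (r+1) k + T (r+1) (k+1) + T r (k+1)) / 4"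
    using np by (simp add: field_simps)
qed

end
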